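(* Let $A,B$ be closed linear relations in $X^2$ such that $\{A,B\}$ is a dual pair with $(A^* )_s|_{D(B)}=B_s$ and $(B^* )_s|_{D(A)}=A_s$. Suppose $B^*(0)\cap N(A^* )=\{0\}$, $A^*(0)\cap N(B^* )=\{0\}$, and that $\tilde A\in\mathrm{Ext}\{A,B\}$ satisfies $\dim(D(B^* )/D(\tilde A))=\dim(D(\tilde A)/D(A))$. Then $\tilde A$ is a quasi-selfadjoint extension of $\{A,B\}$.
   Context: $X$ is a complex Hilbert space; linear relations are linear subspaces of $X^2=X\times X$, with domain $D(T)$, $N(T)=\{x:(x,0)\in T\}$, $T(0)=\{y:(0,y)\in T\}$. Adjoint: $T^*=\{(f,g):\langle g,x\rangle=\langle f,y\rangle\ \forall(x,y)\in T\}$. For closed $T$: $T_\infty=\{(0,y)\in T\}$, $T_s=T\ominus T_\infty$ (an operator with $D(T_s)=D(T)$). Closed relations $A,B$ form a dual pair $\{A,B\}$ if $A\subset B^*$ (equivalently $B\subset A^*$). $\mathrm{Ext}\{A,B\}$ is the set of closed relations $\tilde A$ with $A\subset\tilde A\subset B^*$. An extension $\tilde A\in\mathrm{Ext}\{A,B\}$ is quasi-selfadjoint if $\dim(D(\tilde A)/D(A))=\dim(D(\tilde A^* )/D(B))$. *)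

theory Defs
  imports "HOL-Analysis.Analysis"
begin

text \<open>HOL-Analysis only provides real inner product spaces, so we introduce complex
Hilbert spaces as a type class: a Banach space (complete normed space) carrying a
complex scalar multiplication compatible with the real one, and a complex inner
product (linear in the second, conjugate-linear in the first argument) inducing the norm.\<close>

class chilbert = banach +
  fixes scaleC :: "complex \<Rightarrow> 'a \<Rightarrow> 'a" (infixr \<open>*\<^sub>C\<close> 75)
    and cinner :: "'a \<Rightarrow> 'a \<Rightarrow> complex"
  assumes scaleC_add_right: "a *\<^sub>C (x + y) = a *\<^sub>C x + a *\<^sub>C y"
    and scaleC_add_left: "(a + b) *\<^sub>C x = a *\<^sub>C x + b *\<^sub>C x"
    and scaleC_scaleC: "a *\<^sub>C (b *\<^sub>C x) = (a * b) *\<^sub>C x"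
    and scaleC_one: "1 *\<^sub>C x = x"
    and scaleR_scaleC: "scaleR r x = complex_of_real r *\<^sub>C x"
    and cinner_commute: "cinner x y = cnj (cinner y x)"
    and cinner_add_right: "cinner x (y + z) = cinner x y + cinner x z"
    and cinner_scaleC_right: "cinner x (a *\<^sub>C y) = a * cinner x y"
    and cinner_self_norm: "cinner x x = complex_of_real ((norm x)\<^sup>2)"

definition lin_rel :: "('a::chilbert \<times> 'a) set \<Rightarrow> bool" where
  "lin_rel T \<longleftrightarrow> (0, 0) \<in> T \<and> (\<forall>p\<in>T. \<forall>q\<in>T. p + q \<in> T)
     \<and> (\<forall>c x y. (x, y) \<in> T \<longrightarrow> (c *\<^sub>C x, c *\<^sub>C y) \<in> T)"

definition closed_lin_rel :: "('a::chilbert \<times> 'a) set \<Rightarrow> bool" where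
  "closed_lin_rel T \<longleftrightarrow> lin_rel T \<and> closed T"

definition dom_rel :: "('a::chilbert \<times> 'a) set \<Rightarrow> 'a set" where
  "dom_rel T = {x. \<exists>y. (x, y) \<in> T}"

definition ker_rel :: "('a::chilbert \<times> 'a) set \<Rightarrow> 'a set" where
  "ker_rel T = {x. (x, 0) \<in> T}"

definition mul_rel :: "('a::chilbert \<times> 'a) set \<Rightarrow> 'a set" where
  "mul_rel T = {y. (0, y) \<in> T}"  \<comment> \<open>T(0)\<close>

definition adj_rel :: "('a::chilbert \<times> 'a) set \<Rightarrow> ('a \<times> 'a) set" where
  "adj_rel T = {(f, g). \<forall>(x, y)\<in>T. cinner g x = cinner f y}"

definition cinner2 :: "('a::chilbert \<times> 'a) \<Rightarrow> ('a \<times> 'a) \<Rightarrow> complex" where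
  "cinner2 p q = cinner (fst p) (fst q) + cinner (snd p) (snd q)"

definition rel_infty :: "('a::chilbert \<times> 'a) set \<Rightarrow> ('a \<times> 'a) set" where
  "rel_infty T = {p \<in> T. fst p = 0}"

definition rel_s :: "('a::chilbert \<times> 'a) set \<Rightarrow> ('a \<times> 'a) set" where
  "rel_s T = {p \<in> T. \<forall>q\<in>rel_infty T. cinner2 p q = 0}"

definition restrict_rel :: "('a::chilbert \<times> 'a) set \<Rightarrow> 'a set \<Rightarrow> ('a \<times> 'a) set" where
  "restrict_rel T D = {p \<in> T. fst p \<in> D}"

definition dual_pair :: "('a::chilbert \<times> 'a) set \<Rightarrow> ('a \<times> 'a) set \<Rightarrow> bool" where
  "dual_pair A B \<longleftrightarrow> closed_lin_rel A \<and> closed_lin_rel B \<and> A \<subseteq> adj_rel B"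

definition Ext :: "('a::chilbert \<times> 'a) set \<Rightarrow> ('a \<times> 'a) set \<Rightarrow> ('a \<times> 'a) set set" where
  "Ext A B = {At. closed_lin_rel At \<and> A \<subseteq> At \<and> At \<subseteq> adj_rel B}"

text \<open>S is a basis of V modulo U: S \<subseteq> V, S is linearly independent modulo U, and
U + span S = V. Then dim(V/U) is the cardinality of any such S.\<close>
definition quot_basis :: "'a::chilbert set \<Rightarrow> 'a set \<Rightarrow> 'a set \<Rightarrow> bool" where
  "quot_basis U V S \<longleftrightarrow> S \<subseteq> V \<and>
     (\<forall>F c. finite F \<longrightarrow> F \<subseteq> S \<longrightarrow> (\<Sum>v\<in>F. c v *\<^sub>C v) \<in> U \<longrightarrow> (\<forall>v\<in>F. c v = 0)) \<and>
     V = {u + (\<Sum>v\<in>F. c v *\<^sub>C v) | u F c. u \<in> U \<and> finite F \<and> F \<subseteq> S}"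

text \<open>dim(V/U) = dim(V'/U') (equality of cardinals).\<close>
definition quot_dim_eq :: "'a::chilbert set \<Rightarrow> 'a set \<Rightarrow> 'a set \<Rightarrow> 'a set \<Rightarrow> bool" where
  "quot_dim_eq V U V' U' \<longleftrightarrow>
     (\<exists>S S' f. quot_basis U V S \<and> quot_basis U' V' S' \<and> bij_betw f S S')"

definition quasi_selfadjoint :: "('a::chilbert \<times> 'a) set \<Rightarrow> ('a \<times> 'a) set \<Rightarrow> ('a \<times> 'a) set \<Rightarrow> bool" where
  "quasi_selfadjoint A B At \<longleftrightarrow> At \<in> Ext A B \<and>
     quot_dim_eq (dom_rel At) (dom_rel A) (dom_rel (adj_rel At)) (dom_rel B)"

end

theory Submission
  imports Defs
begin


lemma scaleC_zero_left[simp]: "(0::complex) *\<^sub>C (x::'a::chilbert) = 0"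
proof -
  have "(0::complex) *\<^sub>C x = (0+0) *\<^sub>C x" by simp
  also have "\<dots> = 0 *\<^sub>C x + 0 *\<^sub>C x" by (rule scaleC_add_left)
  finally show ?thesis by simp
qed

lemma scaleC_minus1: "(-1::complex) *\<^sub>C (x::'a::chilbert) = - x"
  using scaleR_scaleC[of "-1" x] by simp

lemma scaleC_minus_left: "(-c) *\<^sub>C (x::'a::chilbert) = - (c *\<^sub>C x)"
proof -
  have "(-c) *\<^sub>C x = ((-1) * c) *\<^sub>C x" by simp
  also have "\<dots> = (-1) *\<^sub>C (c *\<^sub>C x)" by (simp add: scaleC_scaleC)
  finally show ?thesis by (simp add: scaleC_minus1)
qed

lemma scaleC_zero_right[simp]: "c *\<^sub>C (0::'a::chilbert) = 0"
proof -
  have "c *\<^sub>C (0::'a) = c *\<^sub>C (0 + 0)" by simp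
  also have "\<dots> = c *\<^sub>C 0 + c *\<^sub>C 0" by (rule scaleC_add_right)
  finally show ?thesis by simp
qed

lemma scaleC_minus_right: "c *\<^sub>C (- x::'a::chilbert) = - (c *\<^sub>C x)"
proof -
  have "c *\<^sub>C (- x) = c *\<^sub>C ((-1) *\<^sub>C x)" by (simp add: scaleC_minus1)
  also have "\<dots> = ((-1) * c) *\<^sub>C x" by (simp add: scaleC_scaleC mult.commute)
  also have "\<dots> = - (c *\<^sub>C x)" by (simp add: scaleC_minus_left)
  finally show ?thesis .
qed

lemma scaleC_diff_right: "c *\<^sub>C (x - y::'a::chilbert) = c *\<^sub>C x - c *\<^sub>C y"
  by (simp only: diff_conv_add_uminus scaleC_add_right scaleC_minus_right)

lemma scaleC_diff_left: "(a - b) *\<^sub>C (x::'a::chilbert) = a *\<^sub>C x - b *\<^sub>C x"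
  by (simp only: diff_conv_add_uminus scaleC_add_left scaleC_minus_left)

lemma cinner_zero_right[simp]: "cinner (x::'a::chilbert) 0 = 0"
proof -
  have "cinner x (0::'a) = cinner x (0 + 0)" by simp
  also have "\<dots> = cinner x 0 + cinner x 0" by (rule cinner_add_right)
  finally show ?thesis by simp
qed

lemma cinner_zero_left[simp]: "cinner 0 (x::'a::chilbert) = 0"
  using cinner_commute[of 0 x] by simp

lemma cinner_add_left: "cinner (x + y) (z::'a::chilbert) = cinner x z + cinner y z"
proof -
  have "cinner (x+y) z = cnj (cinner z (x+y))" by (rule cinner_commute)
  also have "\<dots> = cnj (cinner z x) + cnj (cinner z y)" by (simp add: cinner_add_right)
  finally show ?thesis by (simp add: cinner_commute[of x z] cinner_commute[of y z])
qed

lemma cinner_scaleC_left: "cinner (a *\<^sub>C x) (y::'a::chilbert) = cnj a * cinner x y"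
proof -
  have "cinner (a *\<^sub>C x) y = cnj (cinner y (a *\<^sub>C x))" by (rule cinner_commute)
  also have "\<dots> = cnj a * cnj (cinner y x)" by (simp add: cinner_scaleC_right)
  finally show ?thesis by (simp add: cinner_commute[of x y])
qed

lemma cinner_minus_right: "cinner x (- y::'a::chilbert) = - cinner x y"
proof -
  have "cinner x (- y) = cinner x ((-1) *\<^sub>C y)" by (simp only: scaleC_minus1)
  also have "\<dots> = (-1) * cinner x y" by (rule cinner_scaleC_right)
  also have "\<dots> = - cinner x y" by simp
  finally show ?thesis .
qed

lemma cinner_minus_left: "cinner (- x) (y::'a::chilbert) = - cinner x y"
proof -
  have "cinner (- x) y = cnj (cinner y (- x))" by (rule cinner_commute)
  also have "\<dots> = - cnj (cinner y x)" by (simp add: cinner_minus_right)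
  finally show ?thesis by (simp add: cinner_commute[of x y])
qed

lemma cinner_diff_right: "cinner x (y - z::'a::chilbert) = cinner x y - cinner x z"
  by (simp only: diff_conv_add_uminus cinner_add_right cinner_minus_right)

lemma cinner_diff_left: "cinner (x - y) (z::'a::chilbert) = cinner x z - cinner y z"
  by (simp only: diff_conv_add_uminus cinner_add_left cinner_minus_left)

lemma cinner_self_eq_zero: "cinner x (x::'a::chilbert) = 0 \<longleftrightarrow> x = 0"
  using cinner_self_norm[of x] by auto

lemma cinner_expand:
  "cinner (w - t *\<^sub>C v) (w - t *\<^sub>C (v::'a::chilbert)) =
     cinner w w - t * cinner w v - cnj t * cinner v w + cnj t * t * cinner v v"
  by (simp add: cinner_diff_left cinner_diff_right cinner_scaleC_left cinner_scaleC_right algebra_simps)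

lemma parallelogram:
  "norm (a - b)^2 + norm (a + b)^2 = 2 * norm a ^2 + 2 * norm (b::'a::chilbert) ^2"
proof -
  have "complex_of_real (norm (a - b)^2 + norm (a + b)^2) = complex_of_real (2 * norm a ^2 + 2 * norm b ^2)"
    by (simp only: of_real_add of_real_mult cinner_self_norm[symmetric])
       (simp add: cinner_diff_left cinner_diff_right cinner_add_left cinner_add_right)
  then show ?thesis using of_real_eq_iff by blast
qed



instantiation prod :: (chilbert, chilbert) chilbert
begin
definition scaleC_prod_def: "scaleC c p = (c *\<^sub>C fst p, c *\<^sub>C snd p)"
definition cinner_prod_def: "cinner p q = cinner (fst p) (fst q) + cinner (snd p) (snd q)"
instance
proof
  fix a b :: complex and x y z :: "'a \<times> 'b" and r :: real
  show "a *\<^sub>C (x + y) = a *\<^sub>C x + a *\<^sub>C y" by (simp add: scaleC_prod_def scaleC_add_right)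
  show "(a + b) *\<^sub>C x = a *\<^sub>C x + b *\<^sub>C x" by (simp add: scaleC_prod_def scaleC_add_left)
  show "a *\<^sub>C b *\<^sub>C x = (a * b) *\<^sub>C x" by (simp add: scaleC_prod_def scaleC_scaleC)
  show "1 *\<^sub>C x = x" by (simp add: scaleC_prod_def scaleC_one)
  show "r *\<^sub>R x = complex_of_real r *\<^sub>C x" by (simp add: scaleC_prod_def scaleR_scaleC prod_eq_iff)
  show "cinner x y = cnj (cinner y x)" by (simp add: cinner_prod_def) (metis cinner_commute)
  show "cinner x (y + z) = cinner x y + cinner x z" by (simp add: cinner_prod_def cinner_add_right)
  show "cinner x (a *\<^sub>C y) = a * cinner x y" by (simp add: cinner_prod_def scaleC_prod_def cinner_scaleC_right algebra_simps)
  show "cinner x x = complex_of_real ((norm x)\<^sup>2)"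
    by (simp add: cinner_prod_def norm_prod_def cinner_self_norm)
qed
end

lemma cinner_prod_cinner2: "cinner p q = cinner2 p q"
  by (simp add: cinner_prod_def cinner2_def)

definition csubspace :: "'a::chilbert set \<Rightarrow> bool" where
  "csubspace M \<longleftrightarrow> 0 \<in> M \<and> (\<forall>x\<in>M. \<forall>y\<in>M. x + y \<in> M) \<and> (\<forall>c. \<forall>x\<in>M. c *\<^sub>C x \<in> M)"

lemma lin_rel_csubspace: "lin_rel T \<longleftrightarrow> csubspace T"
  unfolding lin_rel_def csubspace_def scaleC_prod_def zero_prod_def
  by (auto simp: Ball_def split_paired_All)

lemma csubspace_diff: "csubspace M \<Longrightarrow> x \<in> M \<Longrightarrow> y \<in> M \<Longrightarrow> x - y \<in> M"
  unfolding csubspace_def by (metis diff_conv_add_uminus scaleC_minus1)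

lemma csubspace_scaleR: "csubspace M \<Longrightarrow> x \<in> M \<Longrightarrow> r *\<^sub>R x \<in> M"
  unfolding csubspace_def by (simp add: scaleR_scaleC)

lemma minimizer_exists:
  fixes M :: "'a::chilbert set"
  assumes M: "csubspace M" "closed M"
  shows "\<exists>m\<in>M. \<forall>m'\<in>M. norm (z - m) \<le> norm (z - m')"
proof -
  define d where "d = Inf ((\<lambda>m. norm (z - m)) ` M)"
  have ne: "(\<lambda>m. norm (z - m)) ` M \<noteq> {}" using M unfolding csubspace_def by auto
  have bdd: "bdd_below ((\<lambda>m. norm (z - m)) ` M)" by (rule bdd_belowI[of _ 0]) auto
  have dle: "d \<le> norm (z - m)" if "m \<in> M" for m
    unfolding d_def using bdd that by (auto intro: cInf_lower)
  have d0: "0 \<le> d" unfolding d_def using ne by (auto intro: cInf_greatest)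
  have ex: "\<exists>m. m \<in> M \<and> norm (z - m)^2 < d^2 + inverse (real (Suc n))" for n
  proof -
    have ep: "0 < inverse (real (Suc n))" by simp
    have "d < sqrt (d^2 + inverse (real (Suc n)))"
      by (rule real_less_rsqrt) (use ep in simp)
    then obtain x where x: "x \<in> (\<lambda>m. norm (z - m)) ` M" "x < sqrt (d^2 + inverse (real (Suc n)))"
      using cInf_lessD[OF ne] unfolding d_def by blast
    then obtain m where m: "m \<in> M" "x = norm (z - m)" by blast
    have "norm (z - m)^2 < (sqrt (d^2 + inverse (real (Suc n))))^2"
      using x m by (intro power_strict_mono) auto
    also have "\<dots> = d^2 + inverse (real (Suc n))" using ep by (simp add: add_nonneg_pos less_imp_le)
    finally show ?thesis using m by blast
  qed
  obtain f where f0: "\<forall>n. f n \<in> M \<and> norm (z - f n)^2 < d^2 + inverse (real (Suc n))"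
    using choice[of "\<lambda>n m. m \<in> M \<and> norm (z - m)^2 < d^2 + inverse (real (Suc n))"] ex by blast
  have f: "\<And>n. f n \<in> M" "\<And>n. norm (z - f n)^2 < d^2 + inverse (real (Suc n))"
    using f0 by auto
  have cd: "norm (f k - f n)^2 \<le> 2 * inverse (real (Suc n)) + 2 * inverse (real (Suc k))" for n k
  proof -
    define a where "a = z - f n"
    define b where "b = z - f k"
    have mid: "(1/2) *\<^sub>R (f n + f k) \<in> M"
      using M(1) f(1) by (intro csubspace_scaleR) (auto simp: csubspace_def)
    have ab: "a + b = 2 *\<^sub>R (z - (1/2) *\<^sub>R (f n + f k))"
      unfolding a_def b_def by (simp add: algebra_simps scaleR_right_distrib scaleR_2)
    have "norm (a + b) = 2 * norm (z - (1/2) *\<^sub>R (f n + f k))" unfolding ab by simp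
    hence "norm (a+b) \<ge> 2 * d" using dle[OF mid] by simp
    hence "norm (a+b)^2 \<ge> (2*d)^2" using d0 by (intro power_mono) auto
    moreover have "norm (a - b)^2 + norm (a + b)^2 = 2 * norm a ^2 + 2 * norm b ^2"
      by (rule parallelogram)
    moreover have "norm (f k - f n)^2 = norm (a - b)^2" unfolding a_def b_def by simp
    moreover have "(2*d)^2 = 4 * d^2" by (simp add: power_mult_distrib)
    ultimately show ?thesis using f(2)[of n] f(2)[of k] unfolding a_def b_def
      by linarith
  qed
  have "Cauchy f"
  proof (rule metric_CauchyI)
    fix e :: real assume e: "0 < e"
    obtain N where N: "inverse (real (Suc N)) < e^2 / 4"
      using reals_Archimedean[of "e^2/4"] e by auto
    show "\<exists>N. \<forall>m\<ge>N. \<forall>n\<ge>N. dist (f m) (f n) < e"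
    proof (intro exI allI impI)
      fix m n assume mn: "N \<le> m" "N \<le> n"
      have i1: "inverse (real (Suc m)) \<le> inverse (real (Suc N))" using mn by (simp add: le_imp_inverse_le)
      have i2: "inverse (real (Suc n)) \<le> inverse (real (Suc N))" using mn by (simp add: le_imp_inverse_le)
      have "dist (f m) (f n)^2 = norm (f m - f n)^2" by (simp add: dist_norm)
      also have "\<dots> \<le> 2 * inverse (real (Suc n)) + 2 * inverse (real (Suc m))" by (rule cd)
      also have "\<dots> < e^2" using i1 i2 N by linarith
      finally show "dist (f m) (f n) < e" by (rule power_less_imp_less_base[of _ 2]) (use e in auto)
    qed
  qed
  then have "convergent f" by (simp add: Cauchy_convergent_iff)
  then obtain L where L: "f \<longlonglongrightarrow> L" unfolding convergent_def by blast
  have LM: "L \<in> M" by (rule closed_sequentially[OF M(2) _ L]) (use f(1) in auto)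
  show ?thesis
  proof (intro bexI[OF _ LM] ballI)
    fix m' assume m': "m' \<in> M"
    have t1: "(\<lambda>n. norm (z - f n)^2) \<longlonglongrightarrow> norm (z - L)^2"
      by (intro tendsto_power tendsto_norm tendsto_diff tendsto_const L)
    have t2: "(\<lambda>n. norm (z - m')^2 + inverse (real (Suc n))) \<longlonglongrightarrow> norm (z - m')^2 + 0"
      by (intro tendsto_add tendsto_const LIMSEQ_inverse_real_of_nat)
    have dd: "d^2 \<le> norm (z - m')^2" using dle[OF m'] d0 by (intro power_mono) auto
    have le: "\<forall>n\<ge>0. norm (z - f n)^2 \<le> norm (z - m')^2 + inverse (real (Suc n))"
    proof (intro allI impI)
      fix n :: nat
      show "norm (z - f n)^2 \<le> norm (z - m')^2 + inverse (real (Suc n))"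
        using f(2)[of n] dd by linarith
    qed
    have "norm (z - L)^2 \<le> norm (z - m')^2 + 0"
        by (rule LIMSEQ_le[OF t1 t2]) (use le in blast)
    then show "norm (z - L) \<le> norm (z - m')"
      using power2_le_imp_le[OF _ norm_ge_zero] by simp
  qed
qed



lemma projection_exists:
  fixes M :: "'a::chilbert set"
  assumes M: "csubspace M" "closed M"
  shows "\<exists>m\<in>M. \<forall>v\<in>M. cinner (z - m) v = 0"
proof -
  obtain m where m: "m \<in> M" "\<forall>m'\<in>M. norm (z - m) \<le> norm (z - m')"
    using minimizer_exists[OF M] by blast
  define w where "w = z - m"
  have "cinner w v = 0" if v: "v \<in> M" for v
  proof -
    define c where "c = cinner v w"
    define s where "s = 1 / (norm v ^2 + 1)"
    define t where "t = complex_of_real s * c"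
    define q where "q = cmod c ^2"
    define nv where "nv = norm v ^2"
    define nw where "nw = norm w ^2"
    have s0: "0 < s" unfolding s_def by (simp add: add_nonneg_pos)
    have snv: "s * nv \<le> 1" unfolding s_def nv_def by (simp add: divide_le_eq_1 add_nonneg_pos)
    have q0: "0 \<le> q" unfolding q_def by simp
    have nv0: "0 \<le> nv" unfolding nv_def by simp
    have "t *\<^sub>C v \<in> M" using M(1) v unfolding csubspace_def by blast
    hence "m + t *\<^sub>C v \<in> M" using M(1) m(1) unfolding csubspace_def by blast
    hence "norm (z - m) \<le> norm (z - (m + t *\<^sub>C v))" using m(2) by blast
    moreover have "z - (m + t *\<^sub>C v) = w - t *\<^sub>C v" unfolding w_def by simp
    ultimately have "norm w \<le> norm (w - t *\<^sub>C v)" unfolding w_def by simp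
    hence le: "nw \<le> norm (w - t *\<^sub>C v)^2" unfolding nw_def by (intro power_mono) auto
    have cwv: "cinner w v = cnj c" unfolding c_def by (rule cinner_commute)
    have cvv: "cinner v v = complex_of_real nv" unfolding nv_def by (rule cinner_self_norm)
    have cww: "cinner w w = complex_of_real nw" unfolding nw_def by (rule cinner_self_norm)
    have ccq: "c * cnj c = complex_of_real q" unfolding q_def by (rule complex_norm_square[symmetric])
    have "complex_of_real (norm (w - t *\<^sub>C v)^2) =
        cinner w w - t * cinner w v - cnj t * cinner v w + cnj t * t * cinner v v"
      by (simp only: cinner_self_norm[symmetric] cinner_expand)
    also have "\<dots> = complex_of_real nw - 2 * complex_of_real s * (c * cnj c)
        + (complex_of_real s)^2 * (c * cnj c) * complex_of_real nv"
      unfolding cwv cvv cww t_def c_def[symmetric] by (simp add: algebra_simps power2_eq_square)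
    also have "\<dots> = complex_of_real (nw - 2 * s * q + s^2 * q * nv)"
      unfolding ccq by simp
    finally have eq: "norm (w - t *\<^sub>C v)^2 = nw - 2 * s * q + s^2 * q * nv"
      using of_real_eq_iff by blast
    have "s * q * (s * nv) \<le> s * q * 1"
      using snv s0 q0 by (intro mult_left_mono) auto
    hence "s^2 * q * nv \<le> s * q" by (simp add: power2_eq_square algebra_simps)
    hence "s * q \<le> 0" using le eq by linarith
    hence "q \<le> 0" using s0 by (simp add: mult_le_0_iff)
    hence "c = 0" using q0 unfolding q_def by simp
    thus ?thesis using cwv by simp
  qed
  thus ?thesis using m(1) unfolding w_def by blast
qed



lemma csubspace_sum:
  assumes "csubspace V" "finite F" "F \<subseteq> V"
  shows "(\<Sum>v\<in>F. c v *\<^sub>C v) \<in> V"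
  using assms(2,3)
proof (induction F rule: finite_induct)
  case empty thus ?case using assms(1) unfolding csubspace_def by simp
next
  case (insert x F)
  have 1: "(\<Sum>v\<in>F. c v *\<^sub>C v) \<in> V" using insert by blast
  have 2: "c x *\<^sub>C x \<in> V" using insert assms(1) unfolding csubspace_def by blast
  have "(\<Sum>v\<in>insert x F. c v *\<^sub>C v) = c x *\<^sub>C x + (\<Sum>v\<in>F. c v *\<^sub>C v)"
    using insert(1,2) by (rule sum.insert)
  thus ?case using 1 2 assms(1) unfolding csubspace_def by simp
qed

lemma lin_sum:
  fixes \<Phi> :: "'a::chilbert \<Rightarrow> 'b::chilbert"
  assumes V: "csubspace V"
    and add: "\<And>x y. x \<in> V \<Longrightarrow> y \<in> V \<Longrightarrow> \<Phi> (x + y) = \<Phi> x + \<Phi> y"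
    and hom: "\<And>c x. x \<in> V \<Longrightarrow> \<Phi> (c *\<^sub>C x) = c *\<^sub>C \<Phi> x"
    and "finite F" "F \<subseteq> V"
  shows "\<Phi> (\<Sum>v\<in>F. c v *\<^sub>C v) = (\<Sum>v\<in>F. c v *\<^sub>C \<Phi> v)"
  using assms(4,5)
proof (induction F rule: finite_induct)
  case empty
  have "0 \<in> V" using V unfolding csubspace_def by simp
  have "\<Phi> 0 = \<Phi> ((0::complex) *\<^sub>C 0)" by simp
  also have "\<dots> = 0" using hom[OF \<open>0 \<in> V\<close>, of 0] by simp
  finally show ?case by simp
next
  case (insert x F)
  have xV: "x \<in> V" and FV: "F \<subseteq> V" using insert by auto
  have sV: "(\<Sum>v\<in>F. c v *\<^sub>C v) \<in> V" using csubspace_sum[OF V insert(1) FV] .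
  have cxV: "c x *\<^sub>C x \<in> V" using V xV unfolding csubspace_def by blast
  have "\<Phi> (\<Sum>v\<in>insert x F. c v *\<^sub>C v) = \<Phi> (c x *\<^sub>C x + (\<Sum>v\<in>F. c v *\<^sub>C v))"
    using insert(1,2) by (simp only: sum.insert[OF insert(1,2)])
  also have "\<dots> = \<Phi> (c x *\<^sub>C x) + \<Phi> (\<Sum>v\<in>F. c v *\<^sub>C v)"
    by (rule add[OF cxV sV])
  also have "\<dots> = c x *\<^sub>C \<Phi> x + (\<Sum>v\<in>F. c v *\<^sub>C \<Phi> v)"
    by (simp only: hom[OF xV] insert(3)[OF FV])
  also have "\<dots> = (\<Sum>v\<in>insert x F. c v *\<^sub>C \<Phi> v)" using insert(1,2) by (simp only: sum.insert[OF insert(1,2)])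
  finally show ?case .
qed

lemma quot_basis_sub:
  assumes qb: "quot_basis U V S" shows "U \<subseteq> V"
proof
  fix u assume u: "u \<in> U"
  have "V = {u + (\<Sum>v\<in>F. c v *\<^sub>C v) | u F c. u \<in> U \<and> finite F \<and> F \<subseteq> S}"
    using qb[unfolded quot_basis_def, THEN conjunct2, THEN conjunct2] .
  moreover have "u \<in> {u + (\<Sum>v\<in>F. c v *\<^sub>C v) | u F c. u \<in> U \<and> finite F \<and> F \<subseteq> S}"
    unfolding mem_Collect_eq
    by (rule exI[of _ u], rule exI[of _ "{}"], rule exI[of _ "\<lambda>_. 0"]) (use u in simp)
  ultimately show "u \<in> V" by simp
qed

lemma basis_transfer:
  fixes \<Phi> :: "'a::chilbert \<Rightarrow> 'b::chilbert"
  assumes qb: "quot_basis U V S"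
    and V: "csubspace V" and V': "csubspace V'" and U': "csubspace U'" "U' \<subseteq> V'"
    and add: "\<And>x y. x \<in> V \<Longrightarrow> y \<in> V \<Longrightarrow> \<Phi> (x + y) = \<Phi> x + \<Phi> y"
    and hom: "\<And>c x. x \<in> V \<Longrightarrow> \<Phi> (c *\<^sub>C x) = c *\<^sub>C \<Phi> x"
    and into: "\<And>x. x \<in> V \<Longrightarrow> \<Phi> x \<in> V'"
    and ker: "\<And>x. x \<in> V \<Longrightarrow> \<Phi> x \<in> U' \<Longrightarrow> x \<in> U"
    and kerU: "\<And>x. x \<in> U \<Longrightarrow> \<Phi> x \<in> U'"
    and surj: "\<And>z. z \<in> V' \<Longrightarrow> \<exists>x\<in>V. z - \<Phi> x \<in> U'"
  shows "inj_on \<Phi> S \<and> quot_basis U' V' (\<Phi> ` S)"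
proof -
  have SV: "S \<subseteq> V" using qb[unfolded quot_basis_def, THEN conjunct1] .
  have UV: "U \<subseteq> V" using quot_basis_sub[OF qb] .
  have indep: "\<And>F c. finite F \<Longrightarrow> F \<subseteq> S \<Longrightarrow> (\<Sum>v\<in>F. c v *\<^sub>C v) \<in> U \<Longrightarrow> \<forall>v\<in>F. c v = 0"
    using qb[unfolded quot_basis_def, THEN conjunct2, THEN conjunct1] by blast
  have span: "V = {u + (\<Sum>v\<in>F. c v *\<^sub>C v) | u F c. u \<in> U \<and> finite F \<and> F \<subseteq> S}"
    using qb[unfolded quot_basis_def, THEN conjunct2, THEN conjunct2] .
  have linF: "\<Phi> (\<Sum>v\<in>F. c v *\<^sub>C v) = (\<Sum>v\<in>F. c v *\<^sub>C \<Phi> v)" if "finite F" "F \<subseteq> S" for F c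
    using lin_sum[OF V add hom that(1)] that(2) SV by blast
  have U'0: "0 \<in> U'" using U' unfolding csubspace_def by blast
  have inj: "inj_on \<Phi> S"
  proof (rule inj_onI, rule ccontr)
    fix v1 v2 assume v: "v1 \<in> S" "v2 \<in> S" "\<Phi> v1 = \<Phi> v2" "v1 \<noteq> v2"
    define c where "c = (\<lambda>v. if v = v1 then (1::complex) else -1)"
    have fin: "finite {v1, v2}" and sub: "{v1, v2} \<subseteq> S" using v by auto
    have "(\<Sum>v\<in>{v1,v2}. c v *\<^sub>C \<Phi> v) = \<Phi> v1 + (-1) *\<^sub>C \<Phi> v2"
      using v(4) by (simp add: c_def scaleC_one)
    also have "\<dots> = \<Phi> v1 + - \<Phi> v2" by (simp only: scaleC_minus1)
    also have "\<dots> = 0" using v(3) by simp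
    finally have "\<Phi> (\<Sum>v\<in>{v1,v2}. c v *\<^sub>C v) \<in> U'" using linF[OF fin sub] U'0 by simp
    moreover have "(\<Sum>v\<in>{v1,v2}. c v *\<^sub>C v) \<in> V" by (rule csubspace_sum[OF V fin]) (use sub SV in blast)
    ultimately have "(\<Sum>v\<in>{v1,v2}. c v *\<^sub>C v) \<in> U" using ker by blast
    hence "c v1 = 0" using indep[OF fin sub] by blast
    thus False by (simp add: c_def)
  qed
  have ind': "\<forall>v\<in>F'. c' v = 0"
    if F': "finite F'" "F' \<subseteq> \<Phi> ` S" "(\<Sum>v\<in>F'. c' v *\<^sub>C v) \<in> U'" for F' c'
  proof -
    define F where "F = {v \<in> S. \<Phi> v \<in> F'}"
    have FS: "F \<subseteq> S" unfolding F_def by blast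
    have imF: "\<Phi> ` F = F'" using F'(2) unfolding F_def by blast
    have injF: "inj_on \<Phi> F" using inj FS inj_on_subset by blast
    have finF: "finite F" using F'(1) imF injF finite_imageD by blast
    have "(\<Sum>v\<in>F'. c' v *\<^sub>C v) = (\<Sum>v\<in>F. c' (\<Phi> v) *\<^sub>C \<Phi> v)"
      unfolding imF[symmetric] by (rule sum.reindex[OF injF, unfolded comp_def])
    also have "\<dots> = \<Phi> (\<Sum>v\<in>F. c' (\<Phi> v) *\<^sub>C v)" using linF[OF finF FS] by simp
    finally have "\<Phi> (\<Sum>v\<in>F. c' (\<Phi> v) *\<^sub>C v) \<in> U'" using F'(3) by simp
    moreover have "(\<Sum>v\<in>F. c' (\<Phi> v) *\<^sub>C v) \<in> V" by (rule csubspace_sum[OF V finF]) (use FS SV in blast)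
    ultimately have "(\<Sum>v\<in>F. c' (\<Phi> v) *\<^sub>C v) \<in> U" using ker by blast
    hence "\<forall>v\<in>F. c' (\<Phi> v) = 0" using indep[OF finF FS, of "\<lambda>v. c' (\<Phi> v)"] by blast
    thus ?thesis using imF by blast
  qed
  have sub1: "\<Phi> ` S \<subseteq> V'" using into SV by blast
  have span': "V' = {u + (\<Sum>v\<in>F. c v *\<^sub>C v) | u F c. u \<in> U' \<and> finite F \<and> F \<subseteq> \<Phi> ` S}"
  proof (intro equalityI subsetI)
    fix z assume z: "z \<in> V'"
    obtain x where x: "x \<in> V" "z - \<Phi> x \<in> U'" using surj[OF z] by blast
    have "x \<in> {u + (\<Sum>v\<in>F. c v *\<^sub>C v) | u F c. u \<in> U \<and> finite F \<and> F \<subseteq> S}"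
      using x(1) span by simp
    then obtain u0 F c where x2: "x = u0 + (\<Sum>v\<in>F. c v *\<^sub>C v)" "u0 \<in> U" "finite F" "F \<subseteq> S"
      unfolding mem_Collect_eq by blast
    have sV: "(\<Sum>v\<in>F. c v *\<^sub>C v) \<in> V" by (rule csubspace_sum[OF V x2(3)]) (use x2(4) SV in blast)
    have u0V: "u0 \<in> V" using x2(2) UV by blast
    have "\<Phi> x = \<Phi> u0 + \<Phi> (\<Sum>v\<in>F. c v *\<^sub>C v)"
      unfolding x2(1) by (rule add[OF u0V sV])
    also have "\<dots> = \<Phi> u0 + (\<Sum>v\<in>F. c v *\<^sub>C \<Phi> v)" by (simp only: linF[OF x2(3,4)])
    finally have phx: "\<Phi> x = \<Phi> u0 + (\<Sum>v\<in>F. c v *\<^sub>C \<Phi> v)" .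
    define c' where "c' = (\<lambda>w. c (the_inv_into F \<Phi> w))"
    have injF: "inj_on \<Phi> F" using inj x2(4) inj_on_subset by blast
    have "(\<Sum>w\<in>\<Phi> ` F. c' w *\<^sub>C w) = (\<Sum>v\<in>F. c' (\<Phi> v) *\<^sub>C \<Phi> v)"
      by (rule sum.reindex[OF injF, unfolded comp_def])
    also have "\<dots> = (\<Sum>v\<in>F. c v *\<^sub>C \<Phi> v)"
      unfolding c'_def using the_inv_into_f_f[OF injF] by simp
    finally have eqs: "(\<Sum>w\<in>\<Phi> ` F. c' w *\<^sub>C w) = (\<Sum>v\<in>F. c v *\<^sub>C \<Phi> v)" .
    have zeq: "z = ((z - \<Phi> x) + \<Phi> u0) + (\<Sum>w\<in>\<Phi> ` F. c' w *\<^sub>C w)"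
      using phx eqs by (simp add: algebra_simps)
    have inU: "(z - \<Phi> x) + \<Phi> u0 \<in> U'" using x(2) kerU[OF x2(2)] U' unfolding csubspace_def by blast
    have fi: "finite (\<Phi> ` F)" "\<Phi> ` F \<subseteq> \<Phi> ` S" using x2 by auto
    show "z \<in> {u + (\<Sum>v\<in>F. c v *\<^sub>C v) | u F c. u \<in> U' \<and> finite F \<and> F \<subseteq> \<Phi> ` S}"
      unfolding mem_Collect_eq
      by (rule exI[of _ "(z - \<Phi> x) + \<Phi> u0"], rule exI[of _ "\<Phi> ` F"], rule exI[of _ c'])
         (intro conjI zeq inU fi)
  next
    fix z assume "z \<in> {u + (\<Sum>v\<in>F. c v *\<^sub>C v) | u F c. u \<in> U' \<and> finite F \<and> F \<subseteq> \<Phi> ` S}"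
    then obtain u F c where z: "z = u + (\<Sum>v\<in>F. c v *\<^sub>C v)" "u \<in> U'" "finite F" "F \<subseteq> \<Phi> ` S"
      by blast
    have "(\<Sum>v\<in>F. c v *\<^sub>C v) \<in> V'" by (rule csubspace_sum[OF V' z(3)]) (use z(4) sub1 in blast)
    moreover have "u \<in> V'" using z(2) U'(2) by blast
    ultimately show "z \<in> V'" using z(1) V' unfolding csubspace_def by blast
  qed
  have ind'': "\<forall>F c. finite F \<longrightarrow> F \<subseteq> \<Phi> ` S \<longrightarrow> (\<Sum>v\<in>F. c v *\<^sub>C v) \<in> U' \<longrightarrow> (\<forall>v\<in>F. c v = 0)"
    using ind' by blast
  have "quot_basis U' V' (\<Phi> ` S)" unfolding quot_basis_def
    by (intro conjI sub1 ind'' span')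
  thus ?thesis using inj by blast
qed



lemma cinner_pair[simp]: "cinner (a, b) (c, d) = cinner a c + cinner (b::'a::chilbert) (d::'a)"
  by (simp add: cinner_prod_def)

lemma scaleC_pair[simp]: "k *\<^sub>C (a, b) = (k *\<^sub>C a, k *\<^sub>C (b::'a::chilbert))"
  by (simp add: scaleC_prod_def)

lemma adj_mem: "(f, g) \<in> adj_rel T \<longleftrightarrow> (\<forall>x y. (x, y) \<in> T \<longrightarrow> cinner g x = cinner f y)"
  by (auto simp: adj_rel_def)

lemma cs_zero: "csubspace T \<Longrightarrow> (0, 0) \<in> T"
  unfolding csubspace_def zero_prod_def by blast

lemma cs_add: "csubspace T \<Longrightarrow> (a, b) \<in> T \<Longrightarrow> (c, d) \<in> T \<Longrightarrow> (a + c, b + d) \<in> T"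
  unfolding csubspace_def by (metis add_Pair)

lemma cs_diff: "csubspace T \<Longrightarrow> (a, b) \<in> T \<Longrightarrow> (c, d) \<in> T \<Longrightarrow> (a - c, b - d) \<in> T"
  using csubspace_diff[of T "(a,b)" "(c,d)"] by simp

lemma cs_scale: "csubspace T \<Longrightarrow> (a, b) \<in> T \<Longrightarrow> (k *\<^sub>C a, k *\<^sub>C (b::'a::chilbert)) \<in> (T::('a\<times>'a) set)"
  unfolding csubspace_def by (metis scaleC_pair)

lemma adj_csubspace: "csubspace (adj_rel (T::('a::chilbert \<times> 'a) set))"
  unfolding csubspace_def
proof (intro conjI ballI allI)
  show "0 \<in> adj_rel T" unfolding zero_prod_def adj_mem by simp
next
  fix p q assume p: "p \<in> adj_rel T" and q: "q \<in> adj_rel T"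
  obtain f1 g1 where p1: "p = (f1, g1)" by (cases p)
  obtain f2 g2 where q1: "q = (f2, g2)" by (cases q)
  show "p + q \<in> adj_rel T" using p q unfolding p1 q1 add_Pair adj_mem
    by (simp add: cinner_add_left cinner_add_right)
next
  fix c and p assume p: "p \<in> adj_rel T"
  obtain f1 g1 where p1: "p = (f1, g1)" by (cases p)
  show "c *\<^sub>C p \<in> adj_rel T" using p unfolding p1 scaleC_pair adj_mem
    by (simp add: cinner_scaleC_left)
qed

lemma adj_anti: "T \<subseteq> T' \<Longrightarrow> adj_rel T' \<subseteq> adj_rel T"
  unfolding adj_rel_def by blast

lemma adj_sym: assumes "A \<subseteq> adj_rel (B::('a::chilbert \<times> 'a) set)" shows "B \<subseteq> adj_rel A"
proof
  fix p assume p: "p \<in> B"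
  obtain x y where p1: "p = (x, y)" by (cases p)
  show "p \<in> adj_rel A" unfolding p1 adj_mem
  proof (intro allI impI)
    fix f g assume "(f, g) \<in> A"
    hence "(f, g) \<in> adj_rel B" using assms by blast
    hence "cinner g x = cinner f y" using p p1 unfolding adj_mem by blast
    thus "cinner y f = cinner x g" by (metis cinner_commute)
  qed
qed

lemma dom_csubspace: assumes "csubspace (T::('a::chilbert \<times> 'a) set)" shows "csubspace (dom_rel T)"
  unfolding csubspace_def dom_rel_def
proof (intro conjI ballI allI; clarify?)
  show "\<exists>y. (0, y) \<in> T" using cs_zero[OF assms] by blast
next
  fix x y a b assume "(x, a) \<in> T" "(y, b) \<in> T"
  thus "\<exists>z. (x + y, z) \<in> T" using cs_add[OF assms] by blast
next
  fix c x a assume "(x, a) \<in> T"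
  thus "\<exists>z. (c *\<^sub>C x, z) \<in> T" using cs_scale[OF assms] by blast
qed

lemma rel_infty_closed: "closed T \<Longrightarrow> closed (rel_infty (T::('a::chilbert \<times> 'a) set))"
proof -
  assume "closed T"
  moreover have "rel_infty T = T \<inter> ({0} \<times> UNIV)" unfolding rel_infty_def by auto
  ultimately show ?thesis by (simp add: closed_Int closed_Times)
qed

lemma rel_infty_csub: assumes "csubspace (T::('a::chilbert \<times> 'a) set)" shows "csubspace (rel_infty T)"
  unfolding csubspace_def
proof (intro conjI ballI allI)
  show "0 \<in> rel_infty T" using cs_zero[OF assms] by (simp add: zero_prod_def rel_infty_def)
next
  fix p q assume "p \<in> rel_infty T" "q \<in> rel_infty T"
  thus "p + q \<in> rel_infty T" using assms unfolding csubspace_def rel_infty_def by simp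
next
  fix c p assume "p \<in> rel_infty T"
  then obtain b where pb: "p = (0, b)" "(0, b) \<in> T" unfolding rel_infty_def by (cases p) auto
  thus "c *\<^sub>C p \<in> rel_infty T" using cs_scale[OF assms pb(2), of c] by (simp add: rel_infty_def)
qed



lemma mul_lemma:
  fixes A B :: "('a::chilbert \<times> 'a) set"
  assumes A: "closed_lin_rel A" and AB: "A \<subseteq> adj_rel B"
    and h3: "restrict_rel (rel_s (adj_rel B)) (dom_rel A) = rel_s A"
    and h4: "mul_rel (adj_rel B) \<inter> ker_rel (adj_rel A) = {0}"
  shows "mul_rel (adj_rel B) \<subseteq> mul_rel A"
proof
  fix y assume "y \<in> mul_rel (adj_rel B)"
  hence y: "(0, y) \<in> adj_rel B" unfolding mul_rel_def by simp
  have csA: "csubspace A" and clA: "closed A" using A unfolding closed_lin_rel_def lin_rel_csubspace by auto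
  have csR: "csubspace (rel_infty A)" using rel_infty_csub[OF csA] .
  have clR: "closed (rel_infty A)" using rel_infty_closed[OF clA] .
  have csB: "csubspace (adj_rel B)" by (rule adj_csubspace)
  obtain q where q: "q \<in> rel_infty A" "\<forall>v\<in>rel_infty A. cinner ((0, y) - q) v = 0"
    using projection_exists[OF csR clR] by blast
  obtain a where qa: "q = (0, a)" "(0, a) \<in> A" using q(1) unfolding rel_infty_def by (cases q) auto
  define w where "w = y - a"
  have wB: "(0, w) \<in> adj_rel B" unfolding w_def using cs_diff[OF csB y, of 0 a] qa AB by auto
  have orth: "cinner w r = 0" if "(0, r) \<in> A" for r
  proof -
    have "(0, r) \<in> rel_infty A" using that unfolding rel_infty_def by simp
    hence "cinner ((0, y) - q) (0, r) = 0" using q(2) by blast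
    thus ?thesis unfolding qa w_def by simp
  qed
  have key: "cinner w yy = 0" if xy: "(x, yy) \<in> A" for x yy
  proof -
    obtain r where r: "r \<in> rel_infty A" "\<forall>v\<in>rel_infty A. cinner ((x, yy) - r) v = 0"
      using projection_exists[OF csR clR] by blast
    obtain r2 where rr: "r = (0, r2)" "(0, r2) \<in> A" using r(1) unfolding rel_infty_def by (cases r) auto
    have pA: "(x, yy - r2) \<in> A" using cs_diff[OF csA xy rr(2)] by simp
    have "\<forall>v\<in>rel_infty A. cinner2 (x, yy - r2) v = 0"
      using r(2) unfolding rr cinner_prod_cinner2[symmetric] by simp
    hence "(x, yy - r2) \<in> rel_s A" using pA unfolding rel_s_def by simp
    hence "(x, yy - r2) \<in> rel_s (adj_rel B)" using h3 unfolding restrict_rel_def by blast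
    moreover have "(0, w) \<in> rel_infty (adj_rel B)" using wB unfolding rel_infty_def by simp
    ultimately have "cinner2 (x, yy - r2) (0, w) = 0" unfolding rel_s_def by blast
    hence c1: "cinner (yy - r2) w = 0" unfolding cinner2_def by simp
    have c2: "cinner w r2 = 0" using orth[OF rr(2)] .
    have "cinner w yy = cinner w (yy - r2) + cinner w r2" by (simp add: cinner_diff_right)
    also have "cinner w (yy - r2) = cnj (cinner (yy - r2) w)" by (rule cinner_commute)
    finally show ?thesis using c1 c2 by simp
  qed
  have "(w, 0) \<in> adj_rel A" unfolding adj_mem using key by simp
  hence "w \<in> ker_rel (adj_rel A)" unfolding ker_rel_def by simp
  moreover have "w \<in> mul_rel (adj_rel B)" using wB unfolding mul_rel_def by simp
  ultimately have "w = 0" using h4 by blast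
  hence "y = a" unfolding w_def by simp
  thus "y \<in> mul_rel A" using qa unfolding mul_rel_def by simp
qed



theorem theorem3p2:
  fixes A B At :: "('a::chilbert \<times> 'a) set"
  assumes "dual_pair A B"
    and "restrict_rel (rel_s (adj_rel A)) (dom_rel B) = rel_s B"
    and "restrict_rel (rel_s (adj_rel B)) (dom_rel A) = rel_s A"
    and "mul_rel (adj_rel B) \<inter> ker_rel (adj_rel A) = {0}"
    and "mul_rel (adj_rel A) \<inter> ker_rel (adj_rel B) = {0}"
    and "At \<in> Ext A B"
    and "quot_dim_eq (dom_rel (adj_rel B)) (dom_rel At) (dom_rel At) (dom_rel A)"
  shows "quasi_selfadjoint A B At"
proof -
  have clrA: "closed_lin_rel A" and clrB: "closed_lin_rel B" and AB: "A \<subseteq> adj_rel B"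
    using assms(1) unfolding dual_pair_def by auto
  have clrAt: "closed_lin_rel At" and AAt: "A \<subseteq> At" and AtBs: "At \<subseteq> adj_rel B"
    using assms(6) unfolding Ext_def by auto
  have csB: "csubspace B" and clB: "closed B" using clrB unfolding closed_lin_rel_def lin_rel_csubspace by auto
  have csAt: "csubspace At" and clAt: "closed At" using clrAt unfolding closed_lin_rel_def lin_rel_csubspace by auto
  have BA: "B \<subseteq> adj_rel A" by (rule adj_sym[OF AB])
  have csBs: "csubspace (adj_rel B)" and csAts: "csubspace (adj_rel At)" by (rule adj_csubspace)+
  have BAts: "B \<subseteq> adj_rel At" by (rule adj_sym[OF AtBs])
  have AtsAs: "adj_rel At \<subseteq> adj_rel A" by (rule adj_anti[OF AAt])
  have m1: "mul_rel (adj_rel B) \<subseteq> mul_rel A" by (rule mul_lemma[OF clrA AB assms(3) assms(4)])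
  have m2: "mul_rel (adj_rel A) \<subseteq> mul_rel B" by (rule mul_lemma[OF clrB BA assms(2) assms(5)])
  have m1': "(0, y) \<in> At" if "(0, y) \<in> adj_rel B" for y
    using that m1 AAt unfolding mul_rel_def by blast
  have m2': "(0, y) \<in> B" if "(0, y) \<in> adj_rel At" for y
    using that m2 AtsAs unfolding mul_rel_def by blast
  have At0: "(0, 0) \<in> At" by (rule cs_zero[OF csAt])
  have B0: "(0, 0) \<in> B" by (rule cs_zero[OF csB])
  have csAt_add: "p + q \<in> At" if "p \<in> At" "q \<in> At" for p q using csAt that unfolding csubspace_def by blast
  have csAt_sc: "c *\<^sub>C p \<in> At" if "p \<in> At" for p c using csAt that unfolding csubspace_def by blast

  define P where "P u = (SOME a. a \<in> At \<and> (\<forall>v\<in>At. cinner (u - a) v = 0))" for u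
  have Pp: "P u \<in> At \<and> (\<forall>v\<in>At. cinner (u - P u) v = 0)" for u
  proof -
    have "\<exists>a. a \<in> At \<and> (\<forall>v\<in>At. cinner (u - a) v = 0)"
      using projection_exists[OF csAt clAt, of u] by blast
    thus ?thesis unfolding P_def by (rule someI_ex)
  qed
  have Pu: "P u = a" if a: "a \<in> At" "\<forall>v\<in>At. cinner (u - a) v = 0" for u a
  proof -
    define d where "d = P u - a"
    have dA: "d \<in> At" unfolding d_def using csubspace_diff[OF csAt] Pp a(1) by blast
    have "cinner d d = cinner (u - a) d - cinner (u - P u) d"
      unfolding d_def by (simp add: cinner_diff_left)
    also have "\<dots> = 0" using a(2) Pp dA by simp
    finally have "d = 0" by (simp add: cinner_self_eq_zero)
    thus ?thesis unfolding d_def by simp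
  qed
  define W where "W u = u - P u" for u
  have Wo: "\<forall>v\<in>At. cinner (W u) v = 0" for u unfolding W_def using Pp by blast
  have WB: "W u \<in> adj_rel B" if "u \<in> adj_rel B" for u
    unfolding W_def using csubspace_diff[OF csBs that] Pp AtBs by blast
  have Wadd: "W (u1 + u2) = W u1 + W u2" for u1 u2
  proof -
    have "P (u1 + u2) = P u1 + P u2"
    proof (rule Pu)
      show "P u1 + P u2 \<in> At" using csAt_add Pp by blast
      show "\<forall>v\<in>At. cinner (u1 + u2 - (P u1 + P u2)) v = 0"
      proof
        fix v assume v: "v \<in> At"
        have e: "u1 + u2 - (P u1 + P u2) = (u1 - P u1) + (u2 - P u2)" by simp
        have "cinner (u1 + u2 - (P u1 + P u2)) v = cinner (u1 - P u1) v + cinner (u2 - P u2) v"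
          unfolding e by (rule cinner_add_left)
        thus "cinner (u1 + u2 - (P u1 + P u2)) v = 0" using Pp v by simp
      qed
    qed
    thus ?thesis unfolding W_def by simp
  qed
  have Wsc: "W (c *\<^sub>C u) = c *\<^sub>C W u" for c u
  proof -
    have "P (c *\<^sub>C u) = c *\<^sub>C P u"
    proof (rule Pu)
      show "c *\<^sub>C P u \<in> At" using csAt_sc Pp by blast
      show "\<forall>v\<in>At. cinner (c *\<^sub>C u - c *\<^sub>C P u) v = 0"
      proof
        fix v assume v: "v \<in> At"
        have "cinner (c *\<^sub>C u - c *\<^sub>C P u) v = cinner (c *\<^sub>C (u - P u)) v" by (simp add: scaleC_diff_right)
        also have "\<dots> = cnj c * cinner (u - P u) v" by (rule cinner_scaleC_left)
        finally show "cinner (c *\<^sub>C u - c *\<^sub>C P u) v = 0" using Pp v by simp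
      qed
    qed
    thus ?thesis unfolding W_def by (simp add: scaleC_diff_right)
  qed
  define Y where "Y x = (SOME y. (x, y) \<in> adj_rel B)" for x
  have Yp: "(x, Y x) \<in> adj_rel B" if "x \<in> dom_rel (adj_rel B)" for x
    using that unfolding Y_def dom_rel_def by (auto intro: someI_ex)
  define phi where "phi x = - snd (W (x, Y x))" for x
  have K1: "W (x, y) = W (x, Y x)" if xy: "(x, y) \<in> adj_rel B" for x y
  proof -
    have xd: "x \<in> dom_rel (adj_rel B)" using xy unfolding dom_rel_def by blast
    have xY: "(x, Y x) \<in> adj_rel B" using Yp[OF xd] .
    have "(x - x, y - Y x) \<in> adj_rel B" using cs_diff[OF csBs xy xY] .
    hence d0: "(0, y - Y x) \<in> At" using m1' by simp
    have "P (x, y) = P (x, Y x) + (0, y - Y x)"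
    proof (rule Pu)
      show "P (x, Y x) + (0, y - Y x) \<in> At" using csAt_add Pp d0 by blast
      have e2: "(x, y) - (P (x, Y x) + (0, y - Y x)) = (x, Y x) - P (x, Y x)"
        by (simp add: prod_eq_iff algebra_simps)
      show "\<forall>v\<in>At. cinner ((x, y) - (P (x, Y x) + (0, y - Y x))) v = 0"
        unfolding e2 using Pp[of "(x, Y x)"] by blast
    qed
    hence "(x, y) - P (x, y) = (x, Y x) - P (x, Y x)" by (simp add: prod_eq_iff algebra_simps)
    thus ?thesis unfolding W_def .
  qed
  have phi_add: "phi (x1 + x2) = phi x1 + phi x2"
    if x: "x1 \<in> dom_rel (adj_rel B)" "x2 \<in> dom_rel (adj_rel B)" for x1 x2
  proof -
    have s: "(x1 + x2, Y x1 + Y x2) \<in> adj_rel B" using cs_add[OF csBs Yp[OF x(1)] Yp[OF x(2)]] .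
    have "phi (x1 + x2) = - snd (W (x1 + x2, Y x1 + Y x2))" unfolding phi_def using K1[OF s] by simp
    also have "(x1 + x2, Y x1 + Y x2) = (x1, Y x1) + (x2, Y x2)" by simp
    finally show ?thesis unfolding phi_def Wadd by simp
  qed
  have phi_sc: "phi (c *\<^sub>C x) = c *\<^sub>C phi x" if x: "x \<in> dom_rel (adj_rel B)" for c x
  proof -
    have s: "(c *\<^sub>C x, c *\<^sub>C Y x) \<in> adj_rel B" using cs_scale[OF csBs Yp[OF x]] .
    have "phi (c *\<^sub>C x) = - snd (W (c *\<^sub>C x, c *\<^sub>C Y x))" unfolding phi_def using K1[OF s] by simp
    also have "(c *\<^sub>C x, c *\<^sub>C Y x) = c *\<^sub>C (x, Y x)" by simp
    finally show ?thesis unfolding phi_def Wsc by (simp add: scaleC_prod_def scaleC_minus_right)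
  qed
  have Jin: "(- snd (W u), fst (W u)) \<in> adj_rel At" for u
    unfolding adj_mem
  proof (intro allI impI)
    fix a b assume ab: "(a, b) \<in> At"
    have "cinner (W u) (a, b) = 0" using Wo ab by blast
    hence "cinner (fst (W u)) a + cinner (snd (W u)) b = 0" by (cases "W u") simp
    thus "cinner (fst (W u)) a = cinner (- snd (W u)) b" by (simp add: cinner_minus_left eq_neg_iff_add_eq_0)
  qed
  have into: "phi x \<in> dom_rel (adj_rel At)" if "x \<in> dom_rel (adj_rel B)" for x
    unfolding phi_def dom_rel_def using Jin by blast
  have ker: "x \<in> dom_rel At" if x: "x \<in> dom_rel (adj_rel B)" "phi x \<in> dom_rel B" for x
  proof -
    define u where "u = (x, Y x)"
    have uB: "u \<in> adj_rel B" unfolding u_def using Yp[OF x(1)] .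
    obtain w1 w2 where w: "W u = (w1, w2)" by (cases "W u")
    have wBs: "(w1, w2) \<in> adj_rel B" using WB[OF uB] w by simp
    have Jw: "(- w2, w1) \<in> adj_rel At" using Jin[of u] w by simp
    have orthB: "cinner (- w2, w1) v = 0" if v: "v \<in> B" for v
    proof -
      obtain a b where ab: "v = (a, b)" by (cases v)
      have "cinner w2 a = cinner w1 b" using wBs v ab unfolding adj_mem by blast
      thus ?thesis unfolding ab by (simp add: cinner_minus_left)
    qed
    obtain g where g: "(- w2, g) \<in> B" using x(2) w unfolding phi_def dom_rel_def u_def[symmetric] by auto
    have "(- w2 - - w2, w1 - g) \<in> adj_rel At" using cs_diff[OF csAts Jw] g BAts by blast
    hence "(0, w1 - g) \<in> B" using m2' by simp
    hence "(- w2 + 0, g + (w1 - g)) \<in> B" using cs_add[OF csB g] by blast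
    hence "(- w2, w1) \<in> B" by simp
    hence "cinner (- w2, w1) (- w2, w1) = 0" using orthB by blast
    hence "(- w2, w1) = 0" by (simp only: cinner_self_eq_zero)
    hence "W u = 0" using w by (simp add: zero_prod_def)
    hence "u = P u" unfolding W_def by simp
    hence "u \<in> At" using Pp by metis
    thus ?thesis unfolding u_def dom_rel_def by blast
  qed
  have kerU: "phi x \<in> dom_rel B" if x: "x \<in> dom_rel At" for x
  proof -
    obtain z where xz: "(x, z) \<in> At" using x unfolding dom_rel_def by blast
    have "P (x, z) = (x, z)" by (rule Pu[OF xz]) simp
    hence "W (x, z) = 0" unfolding W_def by simp
    hence "W (x, Y x) = 0" using K1 xz AtBs by auto
    hence "phi x = 0" unfolding phi_def by simp
    thus ?thesis using B0 unfolding dom_rel_def by auto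
  qed
  have surj: "\<exists>x\<in>dom_rel (adj_rel B). z - phi x \<in> dom_rel B" if z: "z \<in> dom_rel (adj_rel At)" for z
  proof -
    obtain g where zg: "(z, g) \<in> adj_rel At" using z unfolding dom_rel_def by blast
    obtain b where b: "b \<in> B" "\<forall>v\<in>B. cinner ((z, g) - b) v = 0"
      using projection_exists[OF csB clB] by blast
    obtain b1 b2 where bb: "b = (b1, b2)" by (cases b)
    define r1 where "r1 = z - b1"
    define r2 where "r2 = g - b2"
    have rAts: "(r1, r2) \<in> adj_rel At" unfolding r1_def r2_def
      using cs_diff[OF csAts zg] b(1) bb BAts by blast
    have orthB: "cinner r1 a + cinner r2 c = 0" if "(a, c) \<in> B" for a c
      using b(2) that unfolding bb r1_def r2_def by auto
    have uB: "(r2, - r1) \<in> adj_rel B" unfolding adj_mem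
    proof (intro allI impI)
      fix a c assume "(a, c) \<in> B"
      from orthB[OF this] have "cinner r2 c = - cinner r1 a" by (simp add: add_eq_0_iff)
      thus "cinner (- r1) a = cinner r2 c" by (simp add: cinner_minus_left)
    qed
    have P0: "P (r2, - r1) = 0"
    proof (rule Pu)
      show "0 \<in> At" using At0 by (simp add: zero_prod_def)
      show "\<forall>v\<in>At. cinner ((r2, - r1) - 0) v = 0"
      proof
        fix v assume v: "v \<in> At"
        obtain a c where ac: "v = (a, c)" by (cases v)
        have "cinner r2 a = cinner r1 c" using rAts v ac unfolding adj_mem by blast
        thus "cinner ((r2, - r1) - 0) v = 0" unfolding ac by (simp add: cinner_minus_left)
      qed
    qed
    have "W (r2, Y r2) = W (r2, - r1)" using K1[OF uB] by simp
    also have "\<dots> = (r2, - r1)" unfolding W_def P0 by simp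
    finally have "phi r2 = r1" unfolding phi_def by simp
    moreover have "r2 \<in> dom_rel (adj_rel B)" using uB unfolding dom_rel_def by blast
    moreover have "z - r1 \<in> dom_rel B" unfolding r1_def using b(1) bb unfolding dom_rel_def by auto
    ultimately show ?thesis by metis
  qed
  have csV: "csubspace (dom_rel (adj_rel B))" by (rule dom_csubspace[OF csBs])
  have csV': "csubspace (dom_rel (adj_rel At))" by (rule dom_csubspace[OF csAts])
  have csU': "csubspace (dom_rel B)" by (rule dom_csubspace[OF csB])
  have U'V': "dom_rel B \<subseteq> dom_rel (adj_rel At)" using BAts unfolding dom_rel_def by blast
  obtain S1 S2 f where S: "quot_basis (dom_rel At) (dom_rel (adj_rel B)) S1"
      "quot_basis (dom_rel A) (dom_rel At) S2" "bij_betw f S1 S2"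
    using assms(7) unfolding quot_dim_eq_def by blast
  have tr: "inj_on phi S1 \<and> quot_basis (dom_rel B) (dom_rel (adj_rel At)) (phi ` S1)"
    by (rule basis_transfer[OF S(1) csV csV' csU' U'V' phi_add phi_sc into ker kerU surj])
  have bij: "bij_betw (phi \<circ> inv_into S1 f) S2 (phi ` S1)"
    by (rule bij_betw_trans[OF bij_betw_inv_into[OF S(3)] inj_on_imp_bij_betw]) (use tr in blast)
  have "quot_dim_eq (dom_rel At) (dom_rel A) (dom_rel (adj_rel At)) (dom_rel B)"
    unfolding quot_dim_eq_def using S(2) tr bij by blast
  thus ?thesis unfolding quasi_selfadjoint_def using assms(6) by blast
qed

end
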